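(* Consider an instance of the ranking with submodular valuations problem: a ground set $[m]=\{1,\dots,m\}$, $n$ normalized monotone submodular functions $f^1,\dots,f^n:2^{[m]}\to\mathbb{R}_+$ (given by value oracles), and a weight vector $w\in\mathbb{R}_+^n$. Let $\epsilon=\min\{f^i_S(j) : i\in[n],\ S\subseteq[m],\ j\in[m],\ f^i_S(j)>0\}$, where $f^i_S(j)=f^i(S\cup\{j\})-f^i(S)$. Then the linear ordering produced by the Adaptive Residual Updates algorithm (described below) has cost at most $O(\ln(1/\epsilon))$ times the cost of an optimal linear ordering.
   Context: A set function $f:2^{[m]}\to\mathbb{R}$ is submodular if $f(S)+f(T)\ge f(S\cup T)+f(S\cap T)$ for all $S,T\subseteq[m]$; normalized means $f(\emptyset)=0$; monotone means $f(S)\le f(T)$ whenever $S\subseteq T$. A linear ordering is a bijection $\pi:[m]\to[m]$, where $\pi(t)$ is the element placed at position $t$. The cover time $c_i$ of $f^i$ under $\pi$ is the minimal index $c$ with $f^i(\{\pi(1),\dots,\pi(c)\})\ge 1$ (it is assumed that $f^i([m])\ge1$ for every $i$, so cover times exist). The cost of $\pi$ is $\sum_{i=1}^n w_i c_i$, and the problem asks for an ordering of minimum cost. Adaptive Residual Updates algorithm: start with $S=\emptyset$. For $t=1,\dots,m$: for every $i\in[n]$ and every $j\in[m]\setminus S$ set $P_{ij}=0$ if $f^i(S)\ge 1$, and otherwise $P_{ij}=\min\{1,\ (f^i(S\cup\{j\})-f^i(S))/(1-f^i(S))\}$; then choose $j\in[m]\setminus S$ maximizing $\sum_{i=1}^n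 w_iP_{ij}$, set $S\leftarrow S\cup\{j\}$ and $\pi(t)=j$. *)

theory Defs
  imports Complex_Main
begin

text \<open>Ground set [m] = {1..m}; functions f i for i in {1..n}; orderings are
bijections pi : {1..m} -> {1..m}, pi t = element placed at position t.\<close>

definition submodular_on :: "nat set \<Rightarrow> (nat set \<Rightarrow> real) \<Rightarrow> bool" where
  "submodular_on U g \<longleftrightarrow>
     (\<forall>S T. S \<subseteq> U \<longrightarrow> T \<subseteq> U \<longrightarrow> g S + g T \<ge> g (S \<union> T) + g (S \<inter> T))"

definition monotone_on_sets :: "nat set \<Rightarrow> (nat set \<Rightarrow> real) \<Rightarrow> bool" where
  "monotone_on_sets U g \<longleftrightarrow> (\<forall>S T. S \<subseteq> T \<longrightarrow> T \<subseteq> U \<longrightarrow> g S \<le> g T)"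

definition linear_ordering :: "nat \<Rightarrow> (nat \<Rightarrow> nat) \<Rightarrow> bool" where
  "linear_ordering m \<pi> \<longleftrightarrow> bij_betw \<pi> {1..m} {1..m}"

definition cover_time :: "(nat set \<Rightarrow> real) \<Rightarrow> (nat \<Rightarrow> nat) \<Rightarrow> nat" where
  "cover_time g \<pi> = (LEAST c. g (\<pi> ` {1..c}) \<ge> 1)"

definition ordering_cost :: "nat \<Rightarrow> (nat \<Rightarrow> nat set \<Rightarrow> real) \<Rightarrow> (nat \<Rightarrow> real) \<Rightarrow> (nat \<Rightarrow> nat) \<Rightarrow> real" where
  "ordering_cost n f w \<pi> = (\<Sum>i=1..n. w i * real (cover_time (f i) \<pi>))"

definition resid :: "(nat set \<Rightarrow> real) \<Rightarrow> nat set \<Rightarrow> nat \<Rightarrow> real" where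
  "resid g S j = (if g S \<ge> 1 then 0 else min 1 ((g (insert j S) - g S) / (1 - g S)))"

definition aru_score :: "nat \<Rightarrow> (nat \<Rightarrow> nat set \<Rightarrow> real) \<Rightarrow> (nat \<Rightarrow> real) \<Rightarrow> nat set \<Rightarrow> nat \<Rightarrow> real" where
  "aru_score n f w S j = (\<Sum>i=1..n. w i * resid (f i) S j)"

text \<open>pi is an ordering that the Adaptive Residual Updates algorithm can output
(with arbitrary tie-breaking): at each step t, with S = {pi 1,...,pi (t-1)},
pi t maximises the score over the remaining elements.\<close>
definition aru_ordering :: "nat \<Rightarrow> nat \<Rightarrow> (nat \<Rightarrow> nat set \<Rightarrow> real) \<Rightarrow> (nat \<Rightarrow> real) \<Rightarrow> (nat \<Rightarrow> nat) \<Rightarrow> bool" where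
  "aru_ordering n m f w \<pi> \<longleftrightarrow> linear_ordering m \<pi> \<and>
     (\<forall>t\<in>{1..m}. \<forall>j\<in>{1..m} - \<pi> ` {1..<t}.
        aru_score n f w (\<pi> ` {1..<t}) j \<le> aru_score n f w (\<pi> ` {1..<t}) (\<pi> t))"

definition min_marginal :: "nat \<Rightarrow> nat \<Rightarrow> (nat \<Rightarrow> nat set \<Rightarrow> real) \<Rightarrow> real" where
  "min_marginal n m f = Min {f i (insert j S) - f i S | i S j.
      i \<in> {1..n} \<and> S \<subseteq> {1..m} \<and> j \<in> {1..m} \<and> f i (insert j S) - f i S > 0}"

end

theory Submission imports Defs begin

lemma cover_time_props:
  assumes bij: "bij_betw \<rho> {1..m} {1..m}" and g0: "g {} = 0"
    and mono: "monotone_on_sets {1..m} g" and gm: "g {1..m} \<ge> 1"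
  shows "cover_time g \<rho> \<le> m" "1 \<le> cover_time g \<rho>"
    "\<And>k. k \<le> m \<Longrightarrow> (1 \<le> g (\<rho> ` {1..k}) \<longleftrightarrow> cover_time g \<rho> \<le> k)"
proof -
  have im: "\<rho> ` {1..m} = {1..m}" using bij by (simp add: bij_betw_def)
  have Qm: "1 \<le> g (\<rho> ` {1..m})" using im gm by simp
  show "cover_time g \<rho> \<le> m" unfolding cover_time_def by (rule Least_le) (rule Qm)
  have Qc: "1 \<le> g (\<rho> ` {1..cover_time g \<rho>})" unfolding cover_time_def by (rule LeastI) (rule Qm)
  show "1 \<le> cover_time g \<rho>"
  proof (rule ccontr)
    assume "\<not> 1 \<le> cover_time g \<rho>" then have "cover_time g \<rho> = 0" by simp
    with Qc g0 show False by simp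
  qed
  fix k assume k: "k \<le> m"
  show "(1 \<le> g (\<rho> ` {1..k}) \<longleftrightarrow> cover_time g \<rho> \<le> k)"
  proof
    assume "1 \<le> g (\<rho> ` {1..k})" then show "cover_time g \<rho> \<le> k"
      unfolding cover_time_def by (rule Least_le)
  next
    assume ck: "cover_time g \<rho> \<le> k"
    have "\<rho> ` {1..cover_time g \<rho>} \<subseteq> \<rho> ` {1..k}" using ck by auto
    moreover have "\<rho> ` {1..k} \<subseteq> {1..m}" using im k by auto
    ultimately have "g (\<rho> ` {1..cover_time g \<rho>}) \<le> g (\<rho> ` {1..k})"
      using mono unfolding monotone_on_sets_def by blast
    with Qc show "1 \<le> g (\<rho> ` {1..k})" by simp
  qed
qed

lemma resid_nonneg:
  assumes "monotone_on_sets U g" "S \<subseteq> U" "j \<in> U" shows "0 \<le> resid g S j"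
proof -
  have "g S \<le> g (insert j S)" using assms unfolding monotone_on_sets_def by blast
  then show ?thesis unfolding resid_def by auto
qed

lemma resid_le1: "resid g S j \<le> 1" unfolding resid_def by auto

lemma resid_mem: "j \<in> S \<Longrightarrow> resid g S j = 0" unfolding resid_def by (simp add: insert_absorb)

lemma submod_sum:
  assumes sub: "submodular_on U g" and SU: "S \<subseteq> U" and fin: "finite T" and TU: "T \<subseteq> U"
  shows "g (S \<union> T) - g S \<le> (\<Sum>j\<in>T. g (insert j S) - g S)"
  using fin TU
proof (induction T rule: finite_induct)
  case empty then show ?case by simp
next
  case (insert a T)
  have aU: "a \<in> U" and TU': "T \<subseteq> U" using insert.prems by auto
  have s1: "insert a S \<subseteq> U" "S \<union> T \<subseteq> U" using aU SU TU' by auto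
  have "g (insert a S) + g (S \<union> T) \<ge> g (insert a S \<union> (S \<union> T)) + g (insert a S \<inter> (S \<union> T))"
    using sub[unfolded submodular_on_def, rule_format, OF s1] .
  moreover have "insert a S \<union> (S \<union> T) = S \<union> insert a T" by blast
  moreover have "insert a S \<inter> (S \<union> T) = S" using insert.hyps(2) by blast
  ultimately have "g (S \<union> insert a T) - g (S \<union> T) \<le> g (insert a S) - g S" by simp
  with insert.IH[OF TU'] insert.hyps show ?case by simp
qed

lemma resid_sum_ge1:
  assumes mono: "monotone_on_sets U g" and sub: "submodular_on U g" and SU: "S \<subseteq> U"
    and TU: "T \<subseteq> U" and fin: "finite T" and gS: "g S < 1" and gT: "1 \<le> g T"
  shows "1 \<le> (\<Sum>j\<in>T. resid g S j)"
proof -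
  define r where "r = 1 - g S"
  have r: "r > 0" using gS r_def by simp
  have res: "\<And>j. resid g S j = min 1 ((g (insert j S) - g S) / r)" using gS unfolding resid_def r_def by simp
  have nn: "\<And>j. j \<in> T \<Longrightarrow> 0 \<le> resid g S j" using resid_nonneg[OF mono SU] TU by auto
  show ?thesis
  proof (cases "\<exists>j\<in>T. 1 \<le> (g (insert j S) - g S) / r")
    case True
    then obtain j where j: "j \<in> T" "1 \<le> (g (insert j S) - g S) / r" by blast
    have "resid g S j = 1" using res j(2) by simp
    moreover have "resid g S j \<le> (\<Sum>j\<in>T. resid g S j)"
      by (rule member_le_sum) (use nn fin j in auto)
    ultimately show ?thesis by simp
  next
    case False
    then have eq: "\<And>j. j\<in>T \<Longrightarrow> resid g S j = (g (insert j S) - g S) / r" using res by (auto simp: min_def)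
    have "(\<Sum>j\<in>T. resid g S j) = (\<Sum>j\<in>T. (g (insert j S) - g S) / r)" using eq by simp
    also have "\<dots> = (\<Sum>j\<in>T. g (insert j S) - g S) / r" by (simp add: sum_divide_distrib)
    finally have e2: "(\<Sum>j\<in>T. resid g S j) = (\<Sum>j\<in>T. g (insert j S) - g S) / r" .
    have "g (S \<union> T) - g S \<le> (\<Sum>j\<in>T. g (insert j S) - g S)" by (rule submod_sum[OF sub SU fin TU])
    moreover have "g T \<le> g (S \<union> T)" using mono SU TU unfolding monotone_on_sets_def by blast
    ultimately have "r \<le> (\<Sum>j\<in>T. g (insert j S) - g S)" using gT r_def by simp
    then have "r / r \<le> (\<Sum>j\<in>T. g (insert j S) - g S) / r" using r by (simp add: divide_right_mono)
    then show ?thesis using r e2 by simp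
  qed
qed

definition psi :: "real \<Rightarrow> real \<Rightarrow> real" where
  "psi e r = ln (max r e) + (if e \<le> r then 1 else 0)"

lemma psi_step:
  assumes e: "0 < e" and r2: "0 < r2" and r12: "r2 \<le> r1" and pos: "r2 < r1 \<Longrightarrow> e \<le> r1 - r2"
  shows "min 1 ((r1 - r2) / r1) \<le> psi e r1 - psi e r2"
proof (cases "r2 = r1")
  case True then show ?thesis by (simp add: psi_def)
next
  case False
  then have lt: "r2 < r1" using r12 by simp
  have er1: "e < r1" using pos[OF lt] r2 by simp
  show ?thesis
  proof (cases "e \<le> r2")
    case True
    have "(r1 - r2)/r1 \<le> ln r1 - ln r2"
    proof -
      have "ln (r2/r1) \<le> r2/r1 - 1" using ln_le_minus_one r2 lt by simp
      moreover have "ln (r2/r1) = ln r2 - ln r1" using r2 lt by (simp add: ln_div)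
      moreover have "r2/r1 - 1 = -((r1-r2)/r1)" using lt r2 by (simp add: field_simps)
      ultimately show ?thesis by simp
    qed
    then show ?thesis using True er1 unfolding psi_def by (simp add: max_def)
  next
    case False
    have "ln e \<le> ln r1" using e er1 by simp
    then show ?thesis using False er1 unfolding psi_def by (simp add: max_def)
  qed
qed

lemma psi_total:
  assumes e: "0 < e" and r: "0 < r" and r1: "r \<le> 1"
  shows "psi e 1 - psi e r \<le> 1 + max 0 (ln (1/e))"
proof -
  have "ln e \<le> ln (max r e)" using e by simp
  moreover have "0 \<le> (if e \<le> r then 1 else 0::real)" by simp
  ultimately have lo: "ln e \<le> psi e r" unfolding psi_def by linarith
  have l: "ln (1/e) = - ln e" using e by (simp add: ln_div)
  have mx: "- ln e \<le> max 0 (ln (1/e))" using l by simp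
  show ?thesis
  proof (cases "e \<le> 1")
    case True
    then have "psi e 1 = 1" by (simp add: psi_def max_def)
    then show ?thesis using lo mx by linarith
  next
    case False
    then have "psi e 1 = ln e" by (simp add: psi_def max_def)
    then show ?thesis using lo by simp
  qed
qed

lemma sum_half: "(\<Sum>s=1..2*N. h ((s+1) div 2)) = 2 * (\<Sum>t=1..(N::nat). (h t::real))"
proof (induction N)
  case 0 then show ?case by simp
next
  case (Suc N)
  have "2 * Suc N = Suc (Suc (2*N))" by simp
  then have "(\<Sum>s=1..2*Suc N. h ((s+1) div 2)) = (\<Sum>s=1..2*N. h ((s+1) div 2)) + h (Suc N) + h (Suc N)"
    by simp
  then show ?case using Suc by simp
qed

lemma sum_div: assumes q: "0 < q" shows "(\<Sum>s<q*N. h (s div q)) = real q * (\<Sum>k<N. (h k::real))"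
proof (induction N)
  case 0 then show ?case by simp
next
  case (Suc N)
  have e1: "{..<q*Suc N} = {0..<q*N+q}" by auto
  have "(\<Sum>s<q*Suc N. h (s div q)) = (\<Sum>s\<in>{0..<q*N}. h (s div q)) + (\<Sum>s\<in>{q*N..<q*N+q}. h (s div q))"
    unfolding e1 by (rule sum.atLeastLessThan_concat[symmetric]) auto
  also have "(\<Sum>s\<in>{q*N..<q*N+q}. h (s div q)) = (\<Sum>s\<in>{q*N..<q*N+q}. h N)"
  proof (rule sum.cong)
    fix s assume "s \<in> {q*N..<q*N+q}"
    then have "s div q = N" by (intro div_nat_eqI) auto
    then show "h (s div q) = h N" by simp
  qed simp
  finally show ?case using Suc by (simp add: atLeast0LessThan[symmetric] algebra_simps)
qed

lemma cnt1: assumes "c \<le> M" shows "(\<Sum>t=1..M. if t \<le> c then x else 0) = real c * (x::real)"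
proof -
  have "(\<Sum>t=1..M. if t \<le> c then x else 0) = (\<Sum>t\<in>{t\<in>{1..M}. t \<le> c}. x)"
    by (rule sum.inter_filter[symmetric]) simp
  also have "{t\<in>{1..M}. t \<le> c} = {1..c}" using assms by auto
  finally show ?thesis by simp
qed

lemma cnt2: assumes "c \<le> M" shows "(\<Sum>k<M. if k < c then x else 0) = real c * (x::real)"
proof -
  have "(\<Sum>k<M. if k < c then x else 0) = (\<Sum>t\<in>{t\<in>{..<M}. t < c}. x)"
    by (rule sum.inter_filter[symmetric]) simp
  also have "{t\<in>{..<M}. t < c} = {..<c}" using assms by auto
  finally show ?thesis by simp
qed


locale setting =
  fixes n m :: nat and f :: "nat \<Rightarrow> nat set \<Rightarrow> real" and w :: "nat \<Rightarrow> real" and \<pi> \<sigma> :: "nat \<Rightarrow> nat"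
  assumes hf: "\<forall>i\<in>{1..n}. f i {} = 0 \<and> monotone_on_sets {1..m} (f i) \<and> submodular_on {1..m} (f i)
        \<and> (\<forall>S\<subseteq>{1..m}. f i S \<ge> 0) \<and> f i {1..m} \<ge> 1 \<and> w i \<ge> 0"
  and aru: "aru_ordering n m f w \<pi>" and lin: "linear_ordering m \<sigma>"
begin

lemma f0: "i \<in> {1..n} \<Longrightarrow> f i {} = 0" using hf by blast
lemma fmono: "i \<in> {1..n} \<Longrightarrow> monotone_on_sets {1..m} (f i)" using hf by blast
lemma fsub: "i \<in> {1..n} \<Longrightarrow> submodular_on {1..m} (f i)" using hf by blast
lemma fnn: "i \<in> {1..n} \<Longrightarrow> S \<subseteq> {1..m} \<Longrightarrow> 0 \<le> f i S" using hf by blast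
lemma fm: "i \<in> {1..n} \<Longrightarrow> 1 \<le> f i {1..m}" using hf by blast
lemma wnn: "i \<in> {1..n} \<Longrightarrow> 0 \<le> w i" using hf by blast
lemma fmono': "i \<in> {1..n} \<Longrightarrow> A \<subseteq> B \<Longrightarrow> B \<subseteq> {1..m} \<Longrightarrow> f i A \<le> f i B"
  using fmono unfolding monotone_on_sets_def by blast

lemma bijpi: "bij_betw \<pi> {1..m} {1..m}" using aru by (simp add: aru_ordering_def linear_ordering_def)
lemma bijsig: "bij_betw \<sigma> {1..m} {1..m}" using lin by (simp add: linear_ordering_def)
lemma aru_max: "t \<in> {1..m} \<Longrightarrow> j \<in> {1..m} - \<pi> ` {1..<t} \<Longrightarrow>
   aru_score n f w (\<pi> ` {1..<t}) j \<le> aru_score n f w (\<pi> ` {1..<t}) (\<pi> t)"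
  using aru by (simp add: aru_ordering_def)

definition "c i = cover_time (f i) \<pi>"
definition "cs i = cover_time (f i) \<sigma>"
definition "S t = \<pi> ` {1..<t}"
definition "P i t = resid (f i) (S t) (\<pi> t)"
definition "sc t = aru_score n f w (S t) (\<pi> t)"
definition "eps = min_marginal n m f"
definition "L = 2 + max 0 (ln (1/eps))"
definition "g t = (\<Sum>i=1..n. if t \<le> c i then w i else 0)"
definition "u k = (\<Sum>i=1..n. if k < cs i then w i else 0)"

lemma S_sub: "t \<le> m+1 \<Longrightarrow> S t \<subseteq> {1..m}"
proof -
  assume t: "t \<le> m+1"
  have "\<pi> ` {1..<t} \<subseteq> \<pi> ` {1..m}" using t by auto
  also have "\<dots> = {1..m}" using bijpi by (simp add: bij_betw_def)
  finally show ?thesis by (simp add: S_def)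
qed

lemma pi_in: "t \<in> {1..m} \<Longrightarrow> \<pi> t \<in> {1..m}" using bijpi by (rule bij_betw_apply)

lemma S_Suc: "1 \<le> t \<Longrightarrow> S (Suc t) = insert (\<pi> t) (S t)"
proof -
  assume "1 \<le> t"
  then have "{1..<Suc t} = insert t {1..<t}" by auto
  then show ?thesis by (simp add: S_def)
qed

lemma S_1: "S 1 = {}" by (simp add: S_def)

lemma c_props: assumes "i \<in> {1..n}" shows "1 \<le> c i" "c i \<le> m"
  using cover_time_props[OF bijpi f0[OF assms] fmono[OF assms] fm[OF assms]] by (simp_all add: c_def)

lemma cs_props: assumes "i \<in> {1..n}" shows "1 \<le> cs i" "cs i \<le> m"
  "\<And>k. k \<le> m \<Longrightarrow> cs i \<le> k \<Longrightarrow> 1 \<le> f i (\<sigma> ` {1..k})"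
  using cover_time_props[OF bijsig f0[OF assms] fmono[OF assms] fm[OF assms]] by (simp_all add: cs_def)

lemma cover_iff: assumes i: "i \<in> {1..n}" and t: "1 \<le> t" "t \<le> m+1"
  shows "f i (S t) < 1 \<longleftrightarrow> t \<le> c i"
proof -
  have e: "S t = \<pi> ` {1..t-1}" using t by (auto simp: S_def)
  have "(1 \<le> f i (\<pi> ` {1..t-1})) = (c i \<le> t - 1)"
    using cover_time_props(3)[OF bijpi f0[OF i] fmono[OF i] fm[OF i], of "t-1"] t by (simp add: c_def)
  then show ?thesis using e t by auto
qed

lemma sc_eq: "sc t = (\<Sum>i=1..n. w i * P i t)" by (simp add: sc_def aru_score_def P_def)

lemma P_nonneg: assumes "i \<in> {1..n}" "t \<in> {1..m}" shows "0 \<le> P i t"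
proof -
  have "S t \<subseteq> {1..m}" using assms by (intro S_sub) auto
  then show ?thesis unfolding P_def using resid_nonneg[OF fmono[OF assms(1)] _ pi_in[OF assms(2)]] by blast
qed

lemma P_le1: "P i t \<le> 1" unfolding P_def by (rule resid_le1)

lemma P_covered: "i \<in> {1..n} \<Longrightarrow> 1 \<le> t \<Longrightarrow> t \<le> m \<Longrightarrow> c i < t \<Longrightarrow> P i t = 0"
  using cover_iff[of i t] by (simp add: P_def resid_def)

lemma sc_nonneg: "t \<in> {1..m} \<Longrightarrow> 0 \<le> sc t"
  unfolding sc_eq by (rule sum_nonneg) (simp add: P_nonneg wnn)

lemma eps_le: assumes i: "i \<in> {1..n}" and S': "S' \<subseteq> {1..m}" and j: "j \<in> {1..m}"
  and pos: "0 < f i (insert j S') - f i S'"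
  shows "eps \<le> f i (insert j S') - f i S'" "0 < eps"
proof -
  define M where "M = {f i (insert j S) - f i S | i S j.
      i \<in> {1..n} \<and> S \<subseteq> {1..m} \<and> j \<in> {1..m} \<and> f i (insert j S) - f i S > 0}"
  have "M \<subseteq> (\<lambda>(i,S,j). f i (insert j S) - f i S) ` ({1..n} \<times> Pow {1..m} \<times> {1..m})"
    unfolding M_def by force
  then have fin: "finite M" by (rule finite_subset) auto
  have mem: "f i (insert j S') - f i S' \<in> M" unfolding M_def using i S' j pos by blast
  have e: "eps = Min M" by (simp add: eps_def min_marginal_def M_def)
  show "eps \<le> f i (insert j S') - f i S'" using e fin mem by simp
  have "Min M \<in> M" using fin mem by (intro Min_in) auto
  then show "0 < eps" using e unfolding M_def by auto
qed

lemma eps_pos: assumes i: "i \<in> {1..n}" shows "0 < eps"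
proof -
  have c1: "1 \<le> c i" "c i \<le> m" using c_props[OF i] by auto
  have a: "f i (S (c i)) < 1" using cover_iff[OF i c1(1)] c1 by simp
  have b: "\<not> f i (S (Suc (c i))) < 1" using cover_iff[OF i, of "Suc (c i)"] c1 by simp
  have "S (Suc (c i)) = insert (\<pi> (c i)) (S (c i))" using S_Suc c1 by simp
  then have "0 < f i (insert (\<pi> (c i)) (S (c i))) - f i (S (c i))" using a b by simp
  moreover have "S (c i) \<subseteq> {1..m}" using c1 by (intro S_sub) auto
  moreover have "\<pi> (c i) \<in> {1..m}" using c1 by (intro pi_in) auto
  ultimately show ?thesis using eps_le(2)[OF i] by blast
qed

lemma L_ge2: "2 \<le> L" by (simp add: L_def)

lemma budget: assumes i: "i \<in> {1..n}" shows "(\<Sum>t=1..m. P i t) \<le> L"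
proof -
  define r where "r t = 1 - f i (S t)" for t
  have e: "0 < eps" by (rule eps_pos[OF i])
  have c1: "1 \<le> c i" "c i \<le> m" using c_props[OF i] by auto
  have tele: "(\<Sum>t\<in>{1..<c i}. P i t) \<le> psi eps (r 1) - psi eps (r (c i))"
    using c1(1)
  proof (induction rule: dec_induct)
    case base then show ?case by simp
  next
    case (step k)
    have k: "1 \<le> k" "k \<le> m" "Suc k \<le> c i" using step c1 by auto
    have fk: "f i (S k) < 1" using cover_iff[OF i k(1)] k by simp
    have fk1: "f i (S (Suc k)) < 1" using cover_iff[OF i, of "Suc k"] k by simp
    have SS: "S (Suc k) = insert (\<pi> k) (S k)" using S_Suc k by simp
    have Sk: "S k \<subseteq> {1..m}" using k by (intro S_sub) auto
    have pk: "\<pi> k \<in> {1..m}" using k by (intro pi_in) auto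
    have "insert (\<pi> k) (S k) \<subseteq> {1..m}" using Sk pk by auto
    then have mon: "f i (S k) \<le> f i (S (Suc k))" unfolding SS by (intro fmono'[OF i]) auto
    have Pk: "P i k = min 1 ((r k - r (Suc k)) / r k)"
      using fk SS by (simp add: P_def resid_def r_def)
    have "P i k \<le> psi eps (r k) - psi eps (r (Suc k))"
      unfolding Pk
    proof (rule psi_step[OF e])
      show "0 < r (Suc k)" using fk1 r_def by simp
      show "r (Suc k) \<le> r k" using mon r_def by simp
      assume "r (Suc k) < r k"
      then have "0 < f i (insert (\<pi> k) (S k)) - f i (S k)" using SS r_def by simp
      then have "eps \<le> f i (insert (\<pi> k) (S k)) - f i (S k)" using eps_le(1)[OF i Sk pk] by blast
      then show "eps \<le> r k - r (Suc k)" using SS r_def by simp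
    qed
    moreover have "{1..<Suc k} = insert k {1..<k}" using k by auto
    ultimately show ?case using step.IH by simp
  qed
  have split: "{1..m} = {1..<c i} \<union> {c i..m}" using c1 by auto
  have "(\<Sum>t=1..m. P i t) = (\<Sum>t\<in>{1..<c i}. P i t) + (\<Sum>t\<in>{c i..m}. P i t)"
    unfolding split by (rule sum.union_disjoint) auto
  also have "(\<Sum>t\<in>{c i..m}. P i t) = (\<Sum>t\<in>{c i..m}. if t = c i then P i t else 0)"
    by (rule sum.cong) (use P_covered[OF i] c1 in auto)
  also have "\<dots> = P i (c i)" using c1 by simp
  finally have "(\<Sum>t=1..m. P i t) \<le> psi eps (r 1) - psi eps (r (c i)) + 1"
    using tele P_le1[of i "c i"] by linarith
  moreover have "r 1 = 1" using S_1 f0[OF i] r_def by simp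
  moreover have "psi eps 1 - psi eps (r (c i)) \<le> 1 + max 0 (ln (1/eps))"
  proof (rule psi_total[OF e])
    show "0 < r (c i)" using cover_iff[OF i c1(1)] c1 r_def by simp
    have "S (c i) \<subseteq> {1..m}" using c1 by (intro S_sub) auto
    then show "r (c i) \<le> 1" using fnn[OF i] r_def by simp
  qed
  ultimately show ?thesis by (simp add: L_def)
qed

lemma g_nonneg: "0 \<le> g t" unfolding g_def by (rule sum_nonneg) (simp add: wnn)
lemma u_nonneg: "0 \<le> u t" unfolding u_def by (rule sum_nonneg) (simp add: wnn)
lemma g_anti: "t1 \<le> t2 \<Longrightarrow> g t2 \<le> g t1" unfolding g_def by (rule sum_mono) (auto simp: wnn)
lemma g_zero: "m < t \<Longrightarrow> g t = 0" unfolding g_def using c_props by (intro sum.neutral) fastforce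
lemma u_zero: "m \<le> k \<Longrightarrow> u k = 0" unfolding u_def using cs_props by (intro sum.neutral) fastforce
lemma g_le_u0: "g t \<le> u 0" unfolding g_def u_def
proof (rule sum_mono)
  fix i assume i: "i \<in> {1..n}"
  have "1 \<le> cs i" using cs_props(1)[OF i] .
  then show "(if t \<le> c i then w i else 0) \<le> (if 0 < cs i then w i else 0)" using wnn[OF i] by auto
qed

lemma cover: assumes t: "t \<in> {1..m}" and k: "k \<le> m" shows "g t - u k \<le> real k * sc t"
proof -
  define T where "T = \<sigma> ` {1..k}"
  have TU: "T \<subseteq> {1..m}" using k bijsig unfolding T_def by (auto simp: bij_betw_def)
  have finT: "finite T" by (simp add: T_def)
  have St: "S t \<subseteq> {1..m}" using t by (intro S_sub) auto
  have A: "(\<Sum>i=1..n. if t \<le> c i \<and> cs i \<le> k then w i else 0) \<le> (\<Sum>j\<in>T. aru_score n f w (S t) j)"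
  proof -
    have "(\<Sum>j\<in>T. aru_score n f w (S t) j) = (\<Sum>j\<in>T. \<Sum>i=1..n. w i * resid (f i) (S t) j)"
      by (simp add: aru_score_def)
    also have "\<dots> = (\<Sum>i=1..n. \<Sum>j\<in>T. w i * resid (f i) (S t) j)" by (rule sum.swap)
    also have "\<dots> = (\<Sum>i=1..n. w i * (\<Sum>j\<in>T. resid (f i) (S t) j))" by (simp add: sum_distrib_left)
    finally have eq: "(\<Sum>j\<in>T. aru_score n f w (S t) j) = (\<Sum>i=1..n. w i * (\<Sum>j\<in>T. resid (f i) (S t) j))" .
    have "(\<Sum>i=1..n. if t \<le> c i \<and> cs i \<le> k then w i else 0) \<le> (\<Sum>i=1..n. w i * (\<Sum>j\<in>T. resid (f i) (S t) j))"
    proof (rule sum_mono)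
      fix i assume i: "i \<in> {1..n}"
      have nn: "0 \<le> (\<Sum>j\<in>T. resid (f i) (S t) j)"
        by (rule sum_nonneg) (use resid_nonneg[OF fmono[OF i] St] TU in auto)
      show "(if t \<le> c i \<and> cs i \<le> k then w i else 0) \<le> w i * (\<Sum>j\<in>T. resid (f i) (S t) j)"
      proof (cases "t \<le> c i \<and> cs i \<le> k")
        case True
        have "f i (S t) < 1" using cover_iff[OF i] t True by auto
        moreover have "1 \<le> f i T" using cs_props(3)[OF i k] True T_def by simp
        ultimately have "1 \<le> (\<Sum>j\<in>T. resid (f i) (S t) j)"
          using resid_sum_ge1[OF fmono[OF i] fsub[OF i] St TU finT] by blast
        then have "w i * 1 \<le> w i * (\<Sum>j\<in>T. resid (f i) (S t) j)" using wnn[OF i] by (intro mult_left_mono) auto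
        then show ?thesis using True by simp
      next
        case False then show ?thesis using nn wnn[OF i] by (simp only: if_not_P[OF False]) simp
      qed
    qed
    then show ?thesis using eq by simp
  qed
  have B: "(\<Sum>j\<in>T. aru_score n f w (S t) j) \<le> real k * sc t"
  proof -
    have "(\<Sum>j\<in>T. aru_score n f w (S t) j) \<le> of_nat (card T) * sc t"
    proof (rule sum_bounded_above)
      fix j assume j: "j \<in> T"
      show "aru_score n f w (S t) j \<le> sc t"
      proof (cases "j \<in> S t")
        case True
        then have "aru_score n f w (S t) j = 0" by (simp add: aru_score_def resid_mem)
        then show ?thesis using sc_nonneg[OF t] by simp
      next
        case False
        then show ?thesis using aru_max[OF t, of j] j TU by (auto simp: sc_def S_def)
      qed
    qed
    moreover have "card T \<le> k" unfolding T_def using card_image_le[of "{1..k}" \<sigma>] by simp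
    ultimately show ?thesis using sc_nonneg[OF t]
      by (meson mult_right_mono of_nat_le_iff order_trans)
  qed
  have C: "g t - u k \<le> (\<Sum>i=1..n. if t \<le> c i \<and> cs i \<le> k then w i else 0)"
  proof -
    have "g t - u k = (\<Sum>i=1..n. (if t \<le> c i then w i else 0) - (if k < cs i then w i else 0))"
      by (simp add: g_def u_def sum_subtractf)
    also have "\<dots> \<le> (\<Sum>i=1..n. if t \<le> c i \<and> cs i \<le> k then w i else 0)"
      by (rule sum_mono) (auto simp: wnn)
    finally show ?thesis .
  qed
  show ?thesis using A B C by linarith
qed

lemma sc_budget: assumes a: "1 \<le> a" and b: "b \<le> m" shows "(\<Sum>t\<in>{a..<b}. sc t) \<le> L * g a"
proof -
  have "(\<Sum>t\<in>{a..<b}. sc t) = (\<Sum>t\<in>{a..<b}. \<Sum>i=1..n. w i * P i t)" by (simp add: sc_eq)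
  also have "\<dots> = (\<Sum>i=1..n. \<Sum>t\<in>{a..<b}. w i * P i t)" by (rule sum.swap)
  also have "\<dots> \<le> (\<Sum>i=1..n. (if a \<le> c i then w i else 0) * L)"
  proof (rule sum_mono)
    fix i assume i: "i \<in> {1..n}"
    show "(\<Sum>t\<in>{a..<b}. w i * P i t) \<le> (if a \<le> c i then w i else 0) * L"
    proof (cases "a \<le> c i")
      case True
      have "(\<Sum>t\<in>{a..<b}. P i t) \<le> (\<Sum>t=1..m. P i t)"
        by (rule sum_mono2) (use a b P_nonneg[OF i] in auto)
      also have "\<dots> \<le> L" by (rule budget[OF i])
      finally have "w i * (\<Sum>t\<in>{a..<b}. P i t) \<le> w i * L" using wnn[OF i] by (intro mult_left_mono) auto
      then show ?thesis using True by (simp add: sum_distrib_left mult.commute)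
    next
      case False
      have "(\<Sum>t\<in>{a..<b}. w i * P i t) = 0"
        by (rule sum.neutral) (use False a b P_covered[OF i] in auto)
      then show ?thesis using False by simp
    qed
  qed
  also have "\<dots> = L * g a" unfolding g_def sum_distrib_left by (rule sum.cong) auto
  finally show ?thesis .
qed

lemma window: assumes a: "1 \<le> a" and k: "k \<le> m"
  shows "real l * (g (a+l) - u k) \<le> real k * L * g a"
proof (cases "a + l \<le> m")
  case False
  then have "g (a+l) = 0" by (intro g_zero) auto
  then have "real l * (g (a+l) - u k) \<le> 0" using u_nonneg[of k] by (simp add: mult_nonneg_nonpos)
  moreover have "0 \<le> real k * L * g a" using L_ge2 g_nonneg[of a] by simp
  ultimately show ?thesis by linarith
next
  case True
  have "real l * (g (a+l) - u k) = (\<Sum>t\<in>{a..<a+l}. g (a+l) - u k)" by simp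
  also have "\<dots> \<le> (\<Sum>t\<in>{a..<a+l}. real k * sc t)"
  proof (rule sum_mono)
    fix t assume t: "t \<in> {a..<a+l}"
    have "g (a+l) \<le> g t" using t by (intro g_anti) auto
    moreover have "g t - u k \<le> real k * sc t" using t a True k by (intro cover) auto
    ultimately show "g (a+l) - u k \<le> real k * sc t" by linarith
  qed
  also have "\<dots> = real k * (\<Sum>t\<in>{a..<a+l}. sc t)" by (simp add: sum_distrib_left)
  also have "\<dots> \<le> real k * (L * g a)" using sc_budget[OF a True] by (intro mult_left_mono) auto
  finally show ?thesis by simp
qed

definition "D = nat \<lceil>4 * L\<rceil>"
definition "q = 2 * D"

lemma D_props: "4 * L \<le> real D" "real D \<le> 4 * L + 1" "8 \<le> real D"
proof -
  show a: "4 * L \<le> real D" unfolding D_def by (rule real_nat_ceiling_ge)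
  have "0 \<le> \<lceil>4 * L\<rceil>" using L_ge2 by simp
  then have "real D = of_int \<lceil>4 * L\<rceil>" unfolding D_def by simp
  then show "real D \<le> 4 * L + 1" using of_int_ceiling_le_add_one[of "4*L"] by linarith
  show "8 \<le> real D" using a L_ge2 by linarith
qed

lemma D_pos: "8 \<le> D" using D_props(3) by linarith

lemma per_s: assumes s1: "1 \<le> s" and s2: "s \<le> 2*m"
  shows "g s \<le> u (s div q) + g ((s+1) div 2) / 4"
proof (cases "s < q")
  case True
  then have "s div q = 0" by simp
  then show ?thesis using g_le_u0[of s] g_nonneg[of "(s+1) div 2"] by simp
next
  case False
  define k where "k = s div q"
  define l where "l = D * k"
  define a where "a = s - l"
  have q2: "2 \<le> q" using D_pos by (simp add: q_def)
  have "q div q \<le> s div q" using False by (intro div_le_mono) simp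
  then have k1: "1 \<le> k" using q2 unfolding k_def by simp
  have "k \<le> s div 2" unfolding k_def using q2 by (simp add: div_le_mono2)
  then have km: "k \<le> m" using s2 by linarith
  have "k * q \<le> s" unfolding k_def by (simp add: div_times_less_eq_dividend)
  then have l2: "2 * l \<le> s" unfolding l_def q_def by (simp add: algebra_simps)
  have als: "a + l = s" using l2 unfolding a_def by simp
  have a2: "(s+1) div 2 \<le> a" using l2 unfolding a_def by linarith
  have a1: "1 \<le> a" using a2 s1 by linarith
  have W: "real l * (g s - u k) \<le> real k * L * g a" using window[OF a1 km, of l] als by simp
  have "real k * L * g a \<le> real k * (real D / 4) * g a"
    using D_props(1) g_nonneg[of a] by (intro mult_right_mono mult_left_mono) auto
  then have "(real D * real k) * (g s - u k) \<le> (real D * real k) * (g a / 4)"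
    using W unfolding l_def by (simp add: algebra_simps)
  moreover have "0 < real D * real k" using D_pos k1 by simp
  ultimately have "g s - u k \<le> g a / 4" using mult_left_le_imp_le by blast
  moreover have "g a \<le> g ((s+1) div 2)" using a2 by (rule g_anti)
  ultimately show ?thesis unfolding k_def by linarith
qed

lemma main_sum: "(\<Sum>t=1..m. g t) \<le> 2 * real q * (\<Sum>k<m. u k)"
proof -
  have q3: "3 \<le> q" using D_pos by (simp add: q_def)
  have h1: "(\<Sum>s=1..2*m. g s) = (\<Sum>t=1..m. g t)"
    by (rule sum.mono_neutral_right) (auto intro: g_zero)
  have "(\<Sum>s=1..2*m. g s) \<le> (\<Sum>s=1..2*m. u (s div q) + g ((s+1) div 2) / 4)"
    by (rule sum_mono) (use per_s in auto)
  also have "\<dots> = (\<Sum>s=1..2*m. u (s div q)) + (\<Sum>s=1..2*m. g ((s+1) div 2)) / 4"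
    by (simp add: sum.distrib sum_divide_distrib)
  also have "(\<Sum>s=1..2*m. g ((s+1) div 2)) = 2 * (\<Sum>t=1..m. g t)" by (rule sum_half)
  also have "(\<Sum>s=1..2*m. u (s div q)) \<le> (\<Sum>s<q*m. u (s div q))"
  proof (rule sum_mono2)
    show "{1..2*m} \<subseteq> {..<q*m}"
    proof
      fix s assume "s \<in> {1..2*m}"
      then have "s \<le> 2*m" "1 \<le> m" by auto
      moreover have "3*m \<le> q*m" using q3 by simp
      ultimately have "s < q*m" by linarith
      then show "s \<in> {..<q*m}" by simp
    qed
  qed (auto simp: u_nonneg)
  also have "(\<Sum>s<q*m. u (s div q)) = real q * (\<Sum>k<m. u k)" using q3 by (intro sum_div) simp
  finally show ?thesis using h1 by linarith
qed

lemma alg_eq: "ordering_cost n f w \<pi> = (\<Sum>t=1..m. g t)"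
proof -
  have "(\<Sum>t=1..m. g t) = (\<Sum>i=1..n. \<Sum>t=1..m. if t \<le> c i then w i else 0)"
    unfolding g_def by (rule sum.swap)
  also have "\<dots> = (\<Sum>i=1..n. real (c i) * w i)"
    by (rule sum.cong) (use c_props cnt1 in auto)
  finally show ?thesis by (simp add: ordering_cost_def c_def mult.commute)
qed

lemma opt_eq: "ordering_cost n f w \<sigma> = (\<Sum>k<m. u k)"
proof -
  have "(\<Sum>k<m. u k) = (\<Sum>i=1..n. \<Sum>k<m. if k < cs i then w i else 0)"
    unfolding u_def by (rule sum.swap)
  also have "\<dots> = (\<Sum>i=1..n. real (cs i) * w i)"
    by (rule sum.cong) (use cs_props cnt2 in auto)
  finally show ?thesis by (simp add: ordering_cost_def cs_def mult.commute)
qed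

lemma final: "ordering_cost n f w \<pi> \<le> 60 * max 1 (ln (1 / min_marginal n m f)) * ordering_cost n f w \<sigma>"
proof -
  define M where "M = max 1 (ln (1 / min_marginal n m f))"
  have LM: "L \<le> 3 * M" unfolding L_def M_def eps_def by (simp add: max_def)
  have "2 * real q \<le> 60 * M"
    using D_props(2) LM L_ge2 unfolding q_def by simp
  moreover have "0 \<le> (\<Sum>k<m. u k)" by (rule sum_nonneg) (simp add: u_nonneg)
  ultimately have "2 * real q * (\<Sum>k<m. u k) \<le> 60 * M * (\<Sum>k<m. u k)"
    by (intro mult_right_mono) auto
  then show ?thesis unfolding alg_eq opt_eq M_def[symmetric] using main_sum by linarith
qed

end

theorem theorem1:
  shows "\<exists>C>0. \<forall>(n::nat) (m::nat) (f::nat \<Rightarrow> nat set \<Rightarrow> real) (w::nat \<Rightarrow> real) \<pi> \<sigma>.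
    (\<forall>i\<in>{1..n}. f i {} = 0 \<and> monotone_on_sets {1..m} (f i) \<and> submodular_on {1..m} (f i)
        \<and> (\<forall>S\<subseteq>{1..m}. f i S \<ge> 0) \<and> f i {1..m} \<ge> 1 \<and> w i \<ge> 0) \<longrightarrow>
    aru_ordering n m f w \<pi> \<longrightarrow> linear_ordering m \<sigma> \<longrightarrow>
    ordering_cost n f w \<pi> \<le> C * max 1 (ln (1 / min_marginal n m f)) * ordering_cost n f w \<sigma>"
proof (intro exI[of _ "60::real"] conjI allI impI)
  fix n m f w \<pi> \<sigma>
  assume "\<forall>i\<in>{1..n}. f i {} = 0 \<and> monotone_on_sets {1..m} (f i) \<and> submodular_on {1..m} (f i)
        \<and> (\<forall>S\<subseteq>{1..m}. f i S \<ge> 0) \<and> f i {1..m} \<ge> 1 \<and> w i \<ge> 0"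
    "aru_ordering n m f w \<pi>" "linear_ordering m \<sigma>"
  then interpret setting n m f w \<pi> \<sigma> by unfold_locales
  show "ordering_cost n f w \<pi> \<le> 60 * max 1 (ln (1 / min_marginal n m f)) * ordering_cost n f w \<sigma>"
    by (rule final)
qed simp

end
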